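(* Let $G'$ be any orientation of a series-parallel graph $G$. Then $\chi'_o(G')\le 7$.
   Context: An orientation of an undirected graph replaces each edge $\{u,v\}$ by exactly one of the arcs $(u,v)$, $(v,u)$. An oriented $r$-arc-coloring of a digraph $G=(V,E)$ is a map $c:E\to\{1,\dots,r\}$ such that (i) $c((u,v))\ne c((v,w))$ for every two arcs $(u,v),(v,w)\in E$, and (ii) $c((u,v))\ne c((y,z))$ for all arcs $(u,v),(v,w),(x,y),(y,z)\in E$ with $c((v,w))=c((x,y))$; $\chi'_o(G)$ is the smallest such $r$. Two-terminal series-parallel multigraphs with terminals $(s,t)$ are defined recursively: a single edge $\{s,t\}$ with $s\ne t$ is one; if $(G_1,s_1,t_1),(G_2,s_2,t_2)$ are vertex-disjoint ones, then the parallel composition (identify $s_1$ with $s_2$ and $t_1$ with $t_2$) with terminals $(s_1,t_1)$, and the series composition (identify $t_1$ with $s_2$) with terminals $(s_1,t_2)$, are again ones. A (simple) graph is series-parallel if it is obtained from a two-terminal series-parallel multigraph by merging parallel edges. *)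

theory Defs
  imports Main
begin

text \<open>Simple undirected graphs: a vertex set V and an edge set E of 2-element sets.
  Two-terminal series-parallel graphs (after merging parallel edges) are generated
  inductively; vertex-disjointness of the components is expressed by requiring that
  the two vertex sets meet exactly in the identified terminals.
  Since parallel edges are merged, edge sets are combined by union.\<close>

inductive sp_two_terminal :: "'a set \<Rightarrow> 'a set set \<Rightarrow> 'a \<Rightarrow> 'a \<Rightarrow> bool" where
  sp_edge: "s \<noteq> t \<Longrightarrow> sp_two_terminal {s, t} {{s, t}} s t"
| sp_parallel: "sp_two_terminal V1 E1 s t \<Longrightarrow> sp_two_terminal V2 E2 s t \<Longrightarrow>
     V1 \<inter> V2 = {s, t} \<Longrightarrow> sp_two_terminal (V1 \<union> V2) (E1 \<union> E2) s t"
| sp_series: "sp_two_terminal V1 E1 s m \<Longrightarrow> sp_two_terminal V2 E2 m t \<Longrightarrow>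
     V1 \<inter> V2 = {m} \<Longrightarrow> sp_two_terminal (V1 \<union> V2) (E1 \<union> E2) s t"

definition series_parallel :: "'a set \<Rightarrow> 'a set set \<Rightarrow> bool" where
  "series_parallel V E \<longleftrightarrow> (\<exists>s t. sp_two_terminal V E s t)"

definition orientation :: "'a set set \<Rightarrow> ('a \<times> 'a) set \<Rightarrow> bool" where
  "orientation E A \<longleftrightarrow>
     (\<forall>u v. {u, v} \<in> E \<and> u \<noteq> v \<longrightarrow> ((u, v) \<in> A \<longleftrightarrow> (v, u) \<notin> A)) \<and>
     (\<forall>u v. (u, v) \<in> A \<longrightarrow> u \<noteq> v \<and> {u, v} \<in> E)"

definition oriented_arc_coloring :: "('a \<times> 'a) set \<Rightarrow> nat \<Rightarrow> ('a \<times> 'a \<Rightarrow> nat) \<Rightarrow> bool" where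
  "oriented_arc_coloring A r c \<longleftrightarrow>
     (\<forall>a\<in>A. c a \<in> {1..r}) \<and>
     (\<forall>u v w. (u, v) \<in> A \<and> (v, w) \<in> A \<longrightarrow> c (u, v) \<noteq> c (v, w)) \<and>
     (\<forall>u v w x y z. (u, v) \<in> A \<and> (v, w) \<in> A \<and> (x, y) \<in> A \<and> (y, z) \<in> A \<and>
        c (v, w) = c (x, y) \<longrightarrow> c (u, v) \<noteq> c (y, z))"

definition oriented_chromatic_index :: "('a \<times> 'a) set \<Rightarrow> nat" where
  "oriented_chromatic_index A = (LEAST r. \<exists>c. oriented_arc_coloring A r c)"

end

theory Submission
  imports Defs
begin

definition QT :: "nat \<Rightarrow> nat \<Rightarrow> bool" where
  "QT a b \<longleftrightarrow> a < 7 \<and> b < 7 \<and> (b + 7 - a) mod 7 \<in> {1,2,4}"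

lemma lt7: "(a::nat) < 7 \<Longrightarrow> a = 0 \<or> a = 1 \<or> a = 2 \<or> a = 3 \<or> a = 4 \<or> a = 5 \<or> a = 6" by auto

lemma ex7: "(\<exists>r. P r \<and> r < (7::nat)) \<longleftrightarrow> P 0 \<or> P 1 \<or> P 2 \<or> P 3 \<or> P 4 \<or> P 5 \<or> P 6"
  (is "?L = ?R")
proof
  assume ?L then obtain r where "P r" "r < 7" by blast
  then show ?R apply (drule_tac lt7) apply (elim disjE) apply simp_all done
next
  have h: "P k \<Longrightarrow> k < 7 \<Longrightarrow> ?L" for k by blast
  assume ?R then show ?L using h[of 0] h[of 1] h[of 2] h[of 3] h[of 4] h[of 5] h[of 6] by auto
qed

lemma QT_antisym: "QT a b \<Longrightarrow> QT b a \<Longrightarrow> False"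
  unfolding QT_def apply (elim conjE) apply (drule lt7)+ apply (elim disjE) apply simp_all done

lemma QT_bounds: "QT a b \<Longrightarrow> a < 7 \<and> b < 7 \<and> a \<noteq> b"
  unfolding QT_def by auto

lemma closure7: "p < 7 \<Longrightarrow> q < 7 \<Longrightarrow> p \<noteq> q \<Longrightarrow> \<exists>r. ((if b1 then QT p r else QT r p) \<and> (if b2 then QT r q else QT q r)) \<and> r < 7"
  unfolding ex7 apply (drule lt7)+ apply (elim disjE) apply (simp_all add: QT_def) done

lemma closure: "p < 7 \<Longrightarrow> q < 7 \<Longrightarrow> p \<noteq> q \<Longrightarrow>
   \<exists>r. (if b1 then QT p r else QT r p) \<and> (if b2 then QT r q else QT q r)"
  using closure7 by blast

lemma sp_basic: "sp_two_terminal V E s t \<Longrightarrow> s \<in> V \<and> t \<in> V \<and> s \<noteq> t \<and> (\<forall>e\<in>E. e \<subseteq> V)"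
  by (induction rule: sp_two_terminal.induct) auto

lemma sp_hom:
  assumes "sp_two_terminal V E s t"
    and antis: "\<And>u v. (u,v) \<in> A \<Longrightarrow> (v,u) \<notin> A"
  shows "\<And>p q. p < 7 \<Longrightarrow> q < 7 \<Longrightarrow> p \<noteq> q \<Longrightarrow> ((s,t) \<in> A \<longrightarrow> QT p q) \<Longrightarrow> ((t,s) \<in> A \<longrightarrow> QT q p) \<Longrightarrow>
     \<exists>f. f s = p \<and> f t = q \<and> (\<forall>u v. (u,v) \<in> A \<longrightarrow> {u,v} \<in> E \<longrightarrow> QT (f u) (f v))"
  using assms(1)
proof (induction rule: sp_two_terminal.induct)
  case (sp_edge s t)
  define f where "f = (\<lambda>x. if x = s then p else q)"
  have "\<forall>u v. (u,v) \<in> A \<longrightarrow> {u,v} \<in> {{s,t}} \<longrightarrow> QT (f u) (f v)"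
  proof (intro allI impI)
    fix u v assume uv: "(u,v) \<in> A" "{u,v} \<in> {{s,t}}"
    then have "(u = s \<and> v = t) \<or> (u = t \<and> v = s)" using sp_edge(1)
      by (metis doubleton_eq_iff singletonD)
    then show "QT (f u) (f v)" using uv sp_edge f_def by auto
  qed
  then show ?case using f_def sp_edge by (intro exI[of _ f]) auto
next
  case (sp_parallel V1 E1 s t V2 E2)
  obtain f1 where f1: "f1 s = p" "f1 t = q" "\<forall>u v. (u,v) \<in> A \<longrightarrow> {u,v} \<in> E1 \<longrightarrow> QT (f1 u) (f1 v)"
    using sp_parallel.IH(1) sp_parallel.prems by blast
  obtain f2 where f2: "f2 s = p" "f2 t = q" "\<forall>u v. (u,v) \<in> A \<longrightarrow> {u,v} \<in> E2 \<longrightarrow> QT (f2 u) (f2 v)"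
    using sp_parallel.IH(2) sp_parallel.prems by blast
  define f where "f = (\<lambda>x. if x \<in> V1 then f1 x else f2 x)"
  have b1: "\<forall>e\<in>E1. e \<subseteq> V1" "s \<in> V1" "t \<in> V1" using sp_basic[OF sp_parallel.hyps(1)] by auto
  have b2: "\<forall>e\<in>E2. e \<subseteq> V2" using sp_basic[OF sp_parallel.hyps(2)] by auto
  have e1: "\<forall>x\<in>V1. f x = f1 x" using f_def by auto
  have e2: "\<forall>x\<in>V2. f x = f2 x"
  proof
    fix x assume x: "x \<in> V2"
    show "f x = f2 x"
    proof (cases "x \<in> V1")
      case True
      then have "x = s \<or> x = t" using x sp_parallel.hyps(3) by blast
      then show ?thesis using True f_def f1 f2 by auto
    qed (simp add: f_def)
  qed
  have "\<forall>u v. (u,v) \<in> A \<longrightarrow> {u,v} \<in> E1 \<union> E2 \<longrightarrow> QT (f u) (f v)"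
  proof (intro allI impI)
    fix u v assume uv: "(u,v) \<in> A" "{u,v} \<in> E1 \<union> E2"
    show "QT (f u) (f v)"
    proof (cases "{u,v} \<in> E1")
      case True
      then have "u \<in> V1" "v \<in> V1" using b1 by auto
      then show ?thesis using e1 f1 uv True by auto
    next
      case False
      then have E: "{u,v} \<in> E2" using uv by auto
      then have "u \<in> V2" "v \<in> V2" using b2 by auto
      then show ?thesis using e2 f2 uv E by auto
    qed
  qed
  then show ?case using e1 b1 f1 by auto
next
  case (sp_series V1 E1 s m V2 E2 t)
  obtain r where r: "(if (s,m) \<in> A then QT p r else QT r p)" "(if (m,t) \<in> A then QT r q else QT q r)"
    using closure sp_series.prems by blast
  have r7: "r < 7" "r \<noteq> p" "r \<noteq> q" using r QT_bounds by (auto split: if_splits)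
  have c1: "(s,m) \<in> A \<longrightarrow> QT p r" "(m,s) \<in> A \<longrightarrow> QT r p" using r antis by (auto split: if_splits)
  have c2: "(m,t) \<in> A \<longrightarrow> QT r q" "(t,m) \<in> A \<longrightarrow> QT q r" using r antis by (auto split: if_splits)
  obtain f1 where f1: "f1 s = p" "f1 m = r" "\<forall>u v. (u,v) \<in> A \<longrightarrow> {u,v} \<in> E1 \<longrightarrow> QT (f1 u) (f1 v)"
    using sp_series.IH(1)[of p r] sp_series.prems r7 c1 by metis
  obtain f2 where f2: "f2 m = r" "f2 t = q" "\<forall>u v. (u,v) \<in> A \<longrightarrow> {u,v} \<in> E2 \<longrightarrow> QT (f2 u) (f2 v)"
    using sp_series.IH(2)[of r q] sp_series.prems r7 c2 by metis
  define f where "f = (\<lambda>x. if x \<in> V1 then f1 x else f2 x)"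
  have b1: "\<forall>e\<in>E1. e \<subseteq> V1" "s \<in> V1" using sp_basic[OF sp_series.hyps(1)] by auto
  have b2: "\<forall>e\<in>E2. e \<subseteq> V2" "t \<in> V2" using sp_basic[OF sp_series.hyps(2)] by auto
  have e1: "\<forall>x\<in>V1. f x = f1 x" using f_def by auto
  have e2: "\<forall>x\<in>V2. f x = f2 x"
  proof
    fix x assume x: "x \<in> V2"
    show "f x = f2 x"
    proof (cases "x \<in> V1")
      case True
      then have "x = m" using x sp_series.hyps(3) by blast
      then show ?thesis using True f_def f1 f2 by auto
    qed (simp add: f_def)
  qed
  have "\<forall>u v. (u,v) \<in> A \<longrightarrow> {u,v} \<in> E1 \<union> E2 \<longrightarrow> QT (f u) (f v)"
  proof (intro allI impI)
    fix u v assume uv: "(u,v) \<in> A" "{u,v} \<in> E1 \<union> E2"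
    show "QT (f u) (f v)"
    proof (cases "{u,v} \<in> E1")
      case True
      then have "u \<in> V1" "v \<in> V1" using b1 by auto
      then show ?thesis using e1 f1 uv True by auto
    next
      case False
      then have E: "{u,v} \<in> E2" using uv by auto
      then have "u \<in> V2" "v \<in> V2" using b2 by auto
      then show ?thesis using e2 f2 uv E by auto
    qed
  qed
  then show ?case using e1 e2 b1 b2 f1 f2 by auto
qed

theorem mainTheorem13:
  fixes V :: "'a set" and E :: "'a set set" and A :: "('a \<times> 'a) set"
  assumes "series_parallel V E"
    and "orientation E A"
  shows "oriented_chromatic_index A \<le> 7"
proof -
  obtain s t where st: "sp_two_terminal V E s t" using assms(1) unfolding series_parallel_def by auto
  have o1: "\<forall>u v. {u, v} \<in> E \<and> u \<noteq> v \<longrightarrow> ((u, v) \<in> A \<longleftrightarrow> (v, u) \<notin> A)"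
    using assms(2) unfolding orientation_def by (rule conjunct1)
  have o2: "\<forall>u v. (u, v) \<in> A \<longrightarrow> u \<noteq> v \<and> {u, v} \<in> E"
    using assms(2) unfolding orientation_def by (rule conjunct2)
  have inA: "u \<noteq> v \<and> {u,v} \<in> E" if "(u,v) \<in> A" for u v using o2 that by simp
  have antis: "(v,u) \<notin> A" if uv: "(u,v) \<in> A" for u v
  proof -
    have "u \<noteq> v \<and> {u,v} \<in> E" using inA[OF uv] .
    then have "(u, v) \<in> A \<longleftrightarrow> (v, u) \<notin> A" using o1 by simp
    then show ?thesis using uv by simp
  qed
  obtain r1 where r1: "QT 0 r1" using closure[of 0 1 True True] by auto
  obtain r2 where r2: "QT r2 0" using closure[of 0 1 False True] by auto
  obtain p q where pq: "p < 7" "q < 7" "p \<noteq> q" "(s,t) \<in> A \<longrightarrow> QT p q" "(t,s) \<in> A \<longrightarrow> QT q p"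
  proof (cases "(s,t) \<in> A")
    case True
    then have "(t,s) \<notin> A" by (rule antis)
    then show ?thesis apply (intro that[of 0 r1]) using QT_bounds[OF r1] r1 True by auto
  next
    case False
    then show ?thesis apply (intro that[of 0 r2]) using QT_bounds[OF r2] r2 False by auto
  qed
  obtain f where f: "\<forall>u v. (u,v) \<in> A \<longrightarrow> {u,v} \<in> E \<longrightarrow> QT (f u) (f v)"
    using sp_hom[OF st antis pq] by blast
  have hom: "\<And>u v. (u,v) \<in> A \<Longrightarrow> QT (f u) (f v)" using f inA by blast
  define c :: "'a \<times> 'a \<Rightarrow> nat" where "c = (\<lambda>a. f (snd a) + 1)"
  have "oriented_arc_coloring A 7 c"
    unfolding oriented_arc_coloring_def
  proof (intro conjI allI impI ballI)
    fix a assume "a \<in> A"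
    then have "QT (f (fst a)) (f (snd a))" using hom[of "fst a" "snd a"] by simp
    then show "c a \<in> {1..7}" using QT_bounds c_def by fastforce
  next
    fix u v w assume "(u,v) \<in> A \<and> (v,w) \<in> A"
    then have "QT (f v) (f w)" using hom by blast
    then show "c (u,v) \<noteq> c (v,w)" using QT_bounds c_def by auto
  next
    fix u v w x y z assume h: "(u, v) \<in> A \<and> (v, w) \<in> A \<and> (x, y) \<in> A \<and> (y, z) \<in> A \<and> c (v, w) = c (x, y)"
    then have "f w = f y" using c_def by auto
    have q1: "QT (f v) (f w)" using h hom by blast
    have "QT (f y) (f z)" using h hom by blast
    with \<open>f w = f y\<close> have "QT (f w) (f z)" by simp
    with q1 show "c (u,v) \<noteq> c (y,z)" using QT_antisym c_def by auto
  qed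
  then have "\<exists>c. oriented_arc_coloring A 7 c" by blast
  then show ?thesis unfolding oriented_chromatic_index_def by (rule Least_le)
qed

end
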